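(* Let $k \geq 2$ be an integer and suppose that for every admissible set $\mathcal{H}$ with $|\mathcal{H}| = k$, the difference set $\mathcal{D}(\mathcal{H})$ contains a weak Polignac number. Then \[ \liminf_{x \to \infty} \frac{\mathcal{P}(x)}{x} \;\geq\; \frac{2}{(k-1)\big((k-1)(k-2)+2\big)\,P(k)}. \]
   Context: A positive integer $d$ is a weak Polignac number if there are infinitely many pairs of primes $(p,q)$ with $q - p = d$. For real $x$, $\mathcal{P}(x)$ denotes the number of weak Polignac numbers less than or equal to $x$. A finite set of integers $\mathcal{H} = \{h_1, \ldots, h_k\}$ is admissible if for every prime $p$ there is an integer $m$ with $h_i \not\equiv m \pmod p$ for all $1 \le i \le k$. Its difference set is $\mathcal{D}(\mathcal{H}) = \{h_j - h_i : h_i, h_j \in \mathcal{H},\ h_i < h_j\}$. For an integer $k$, $P(k) = \prod_{p \le k,\ p \text{ prime}} p$ is the product of all primes not exceeding $k$. *)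

theory Defs
  imports "HOL-Analysis.Analysis" "HOL-Computational_Algebra.Primes"
begin

definition weak_polignac :: "nat \<Rightarrow> bool" where
  "weak_polignac d \<longleftrightarrow> d > 0 \<and>
     infinite {(p, q). prime (p::nat) \<and> prime (q::nat) \<and> int q - int p = int d}"

definition polignac_count :: "real \<Rightarrow> nat" where
  "polignac_count x = card {d. weak_polignac d \<and> real d \<le> x}"

definition admissible :: "int set \<Rightarrow> bool" where
  "admissible H \<longleftrightarrow> finite H \<and>
     (\<forall>p::nat. prime p \<longrightarrow> (\<exists>m::int. \<forall>h\<in>H. h mod int p \<noteq> m mod int p))"

definition diff_set :: "int set \<Rightarrow> int set" where
  "diff_set H = {hj - hi | hi hj. hi \<in> H \<and> hj \<in> H \<and> hi < hj}"

definition primorial :: "nat \<Rightarrow> nat" where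
  "primorial k = (\<Prod>p\<in>{p. prime p \<and> p \<le> k}. p)"

end

theory Submission imports Defs begin

fun S :: "nat \<Rightarrow> nat \<Rightarrow> nat" where
  "S c 0 = 0" | "S c (Suc j) = S c j + Suc j * c + 1"

lemma S_closed: "2 * S c j = c * j * (j+1) + 2 * j"
  by (induction j) (auto simp: algebra_simps)

lemma greedy:
  fixes Q :: "nat \<Rightarrow> bool"
  assumes c: "c = card {n\<in>{1..M}. Q n}"
  shows "S c j \<le> M \<Longrightarrow> \<exists>A. finite A \<and> card A = Suc j \<and> A \<subseteq> {0..S c j} \<and>
           (\<forall>a\<in>A. \<forall>b\<in>A. a < b \<longrightarrow> \<not> Q (b - a))"
proof (induction j)
  case 0
  then show ?case by (intro exI[of _ "{0}"]) auto
next
  case (Suc j)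
  have "S c j \<le> M" using Suc.prems by simp
  then obtain A where A: "finite A" "card A = Suc j" "A \<subseteq> {0..S c j}"
    "\<forall>a\<in>A. \<forall>b\<in>A. a < b \<longrightarrow> \<not> Q (b - a)" using Suc.IH by blast
  define C where "C = {S c j + 1 .. S c j + Suc j * c + 1}"
  define B where "B = {x\<in>C. \<exists>a\<in>A. Q (x - a)}"
  have cardC: "card C = Suc j * c + 1" unfolding C_def by simp
  have "B \<subseteq> (\<Union>a\<in>A. (\<lambda>n. n + a) ` {n\<in>{1..M}. Q n})"
  proof
    fix x assume "x \<in> B"
    then obtain a where a: "a \<in> A" "Q (x - a)" "x \<in> C" unfolding B_def by auto
    have "a \<le> S c j" using a A(3) by auto
    moreover have "x \<le> M" using a(3) Suc.prems unfolding C_def by simp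
    moreover have "x > S c j" using a(3) unfolding C_def by simp
    ultimately have "x - a \<in> {n\<in>{1..M}. Q n}" "x = (x - a) + a" using a by auto
    then show "x \<in> (\<Union>a\<in>A. (\<lambda>n. n + a) ` {n\<in>{1..M}. Q n})" using a(1) by blast
  qed
  then have "card B \<le> card (\<Union>a\<in>A. (\<lambda>n. n + a) ` {n\<in>{1..M}. Q n})"
    by (intro card_mono) (auto simp: A(1))
  also have "\<dots> \<le> (\<Sum>a\<in>A. card ((\<lambda>n. n + a) ` {n\<in>{1..M}. Q n}))"
    by (rule card_UN_le[OF A(1)])
  also have "\<dots> \<le> (\<Sum>a\<in>A. c)"
    by (intro sum_mono) (auto simp: c card_image_le)
  also have "\<dots> = Suc j * c" using A(2) by simp
  finally have "card B < card C" using cardC by simp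
  moreover have "finite B" unfolding B_def C_def by simp
  ultimately have "\<not> C \<subseteq> B" using card_mono[of B C] by linarith
  then obtain x where x: "x \<in> C" "x \<notin> B" by blast
  have xgt: "\<forall>a\<in>A. a < x" using A(3) x(1) unfolding C_def by auto
  have xnot: "\<forall>a\<in>A. \<not> Q (x - a)" using x unfolding B_def by auto
  show ?case
  proof (intro exI[of _ "insert x A"] conjI)
    show "finite (insert x A)" using A(1) by simp
    show "card (insert x A) = Suc (Suc j)" using A(1,2) xgt by auto
    show "insert x A \<subseteq> {0..S c (Suc j)}" using A(3) x(1) unfolding C_def by auto
    show "\<forall>a\<in>insert x A. \<forall>b\<in>insert x A. a < b \<longrightarrow> \<not> Q (b - a)"
      using A(4) xgt xnot by auto
  qed
qed

lemma primorial_pos: "primorial k > 0"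
  unfolding primorial_def by (intro prod_pos) (auto simp: prime_gt_0_nat)

lemma prime_dvd_primorial: "prime p \<Longrightarrow> p \<le> k \<Longrightarrow> p dvd primorial k"
  unfolding primorial_def by (intro dvd_prodI) auto

lemma adm_mult:
  fixes A :: "nat set"
  assumes "finite A" "card A = k"
  shows "admissible ((\<lambda>a. int (primorial k) * int a) ` A)"
  unfolding admissible_def
proof (intro conjI allI impI)
  let ?H = "(\<lambda>a. int (primorial k) * int a) ` A"
  show "finite ?H" using assms by simp
  fix p :: nat assume p: "prime p"
  show "\<exists>m::int. \<forall>h\<in>?H. h mod int p \<noteq> m mod int p"
  proof (cases "p \<le> k")
    case True
    then have "int p dvd int (primorial k)" using prime_dvd_primorial[OF p] by simp
    moreover have "int p > 1" using p prime_gt_1_nat by simp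
    ultimately show ?thesis
      by (intro exI[of _ 1]) auto
  next
    case False
    have "card ((\<lambda>h. h mod int p) ` ?H) \<le> card ?H" by (rule card_image_le) (use assms in simp)
    also have "\<dots> \<le> k" using assms card_image_le by blast
    also have "\<dots> < card {0..<int p}" using False by simp
    finally have "\<not> {0..<int p} \<subseteq> (\<lambda>h. h mod int p) ` ?H"
      using card_mono[of "(\<lambda>h. h mod int p) ` ?H" "{0..<int p}"] assms by auto
    then obtain r where r: "r \<in> {0..<int p}" "r \<notin> (\<lambda>h. h mod int p) ` ?H" by blast
    then have "r mod int p = r" by simp
    then show ?thesis using r by (intro exI[of _ r]) force
  qed
qed

lemma count_bound:
  fixes k :: nat
  assumes k: "k \<ge> 2"
    and hyp: "\<forall>H. admissible H \<and> card H = k \<longrightarrow>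
           (\<exists>d\<in>diff_set H. d > 0 \<and> weak_polignac (nat d))"
  shows "2 * M < card {n\<in>{1..M}. weak_polignac (n * primorial k)} * (k - 1) * k + 2 * (k - 1)"
proof (rule ccontr)
  define P where "P = primorial k"
  define Q where "Q = (\<lambda>n. weak_polignac (n * P))"
  define c where "c = card {n\<in>{1..M}. Q n}"
  assume "\<not> ?thesis"
  then have le: "c * (k - 1) * k + 2 * (k - 1) \<le> 2 * M" unfolding c_def Q_def P_def by simp
  have "2 * S c (k - 1) = c * (k - 1) * (k - 1 + 1) + 2 * (k - 1)" by (rule S_closed)
  also have "k - 1 + 1 = k" using k by simp
  finally have "S c (k - 1) \<le> M" using le by simp
  then obtain A where A: "finite A" "card A = Suc (k - 1)" "A \<subseteq> {0..S c (k - 1)}"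
    "\<forall>a\<in>A. \<forall>b\<in>A. a < b \<longrightarrow> \<not> Q (b - a)"
    using greedy[OF c_def] by blast
  have cA: "card A = k" using A(2) k by simp
  let ?H = "(\<lambda>a. int P * int a) ` A"
  have Ppos: "P > 0" unfolding P_def by (rule primorial_pos)
  have inj: "inj_on (\<lambda>a. int P * int a) A" using Ppos by (auto simp: inj_on_def)
  have "card ?H = k" using card_image[OF inj] cA by simp
  moreover have "admissible ?H" unfolding P_def by (rule adm_mult[OF A(1) cA])
  ultimately obtain d where d: "d \<in> diff_set ?H" "d > 0" "weak_polignac (nat d)"
    using hyp by blast
  then obtain hi hj where hh: "hi \<in> ?H" "hj \<in> ?H" "hi < hj" "d = hj - hi"
    unfolding diff_set_def by blast
  then obtain a b where ab: "a \<in> A" "b \<in> A" "hi = int P * int a" "hj = int P * int b"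
    by blast
  have ab3: "int P * int a < int P * int b" using hh ab by simp
  have "a < b" using ab3 Ppos by (simp add: mult_less_cancel_left)
  then have "d = int ((b - a) * P)" using hh(4) ab(3,4)
    by (simp add: of_nat_diff algebra_simps)
  then have "nat d = (b - a) * P" by (simp only: nat_int)
  then have "Q (b - a)" using d(3) unfolding Q_def by simp
  then show False using A(4) ab(1,2) \<open>a < b\<close> by blast
qed

lemma count_ge:
  assumes "x > 0"
  shows "card {n\<in>{1..nat \<lfloor>x / real (primorial k)\<rfloor>}. weak_polignac (n * primorial k)} \<le> polignac_count x"
proof -
  define P where "P = primorial k"
  have Ppos: "P > 0" unfolding P_def by (rule primorial_pos)
  let ?M = "nat \<lfloor>x / real P\<rfloor>"
  have "(\<lambda>n. n * P) ` {n\<in>{1..?M}. weak_polignac (n * P)} \<subseteq> {d. weak_polignac d \<and> real d \<le> x}"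
  proof safe
    fix n assume n: "n \<in> {1..?M}" "weak_polignac (n * P)"
    have "n \<le> ?M" using n(1) by simp
    then have "int n \<le> \<lfloor>x / real P\<rfloor>" using n(1) by (cases "\<lfloor>x / real P\<rfloor> \<ge> 0") (auto simp: le_nat_iff)
    then have "real n \<le> x / real P" by linarith
    then show "real (n * P) \<le> x" using Ppos by (simp add: field_simps)
  qed
  moreover have "finite {d. weak_polignac d \<and> real d \<le> x}"
  proof (rule finite_subset[of _ "{..nat \<lceil>x\<rceil>}"])
    show "{d. weak_polignac d \<and> real d \<le> x} \<subseteq> {..nat \<lceil>x\<rceil>}"
    proof
      fix d assume "d \<in> {d. weak_polignac d \<and> real d \<le> x}"
      then have "real d \<le> x" by simp
      then have "int d \<le> \<lceil>x\<rceil>" by linarith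
      then show "d \<in> {..nat \<lceil>x\<rceil>}" by simp
    qed
  qed simp
  moreover have "inj_on (\<lambda>n. n * P) {n\<in>{1..?M}. weak_polignac (n * P)}" using Ppos by (auto simp: inj_on_def)
  ultimately show ?thesis unfolding polignac_count_def P_def[symmetric]
    using card_inj_on_le by blast
qed

lemma alg_id:
  fixes a b c x :: real
  assumes "a > 0" "b > 0" "c > 0" "x > 0"
  shows "2 / (a * b * c) - 2 / (a * x) = (2 * x / c - 2 * b) / ((a * b) * x)"
  using assms by (simp add: field_simps)

lemma const_le:
  assumes "k \<ge> (2::nat)" "P > 0"
  shows "2 / (real (k - 1) * (real (k - 1) * real (k - 2) + 2) * real P) \<le> 2 / (real (k - 1) * real k * real P)"
proof -
  have k1: "real (k - 1) = real k - 1" "real (k - 2) = real k - 2" using assms by auto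
  have "real k \<le> (real k - 1) * (real k - 2) + 2"
  proof -
    have "0 \<le> (real k - 2)^2" by simp
    then show ?thesis by (simp add: power2_eq_square algebra_simps)
  qed
  moreover have "real k - 1 > 0" "real k > 0" using assms by auto
  ultimately show ?thesis unfolding k1 using assms
    by (intro divide_left_mono mult_right_mono mult_left_mono mult_pos_pos) auto
qed

theorem theorem2:
  fixes k :: nat
  assumes "k \<ge> 2"
    and "\<forall>H. admissible H \<and> card H = k \<longrightarrow>
           (\<exists>d\<in>diff_set H. d > 0 \<and> weak_polignac (nat d))"
  shows "ereal (2 / (real (k - 1) * (real (k - 1) * real (k - 2) + 2) * real (primorial k)))
           \<le> Liminf at_top (\<lambda>x::real. ereal (real (polignac_count x) / x))"
proof -
  define P where "P = primorial k"
  have Ppos: "P > 0" unfolding P_def by (rule primorial_pos)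
  have k1pos: "real (k - 1) > 0" using assms(1) by simp
  define \<alpha> where "\<alpha> = 2 / (real (k - 1) * real k * real P)"
  define g where "g = (\<lambda>x::real. \<alpha> - 2 / (real (k - 1) * x))"
  have ev: "eventually (\<lambda>x. ereal (g x) \<le> ereal (real (polignac_count x) / x)) at_top"
    using eventually_gt_at_top[of "0::real"]
  proof eventually_elim
    case (elim x)
    define M where "M = nat \<lfloor>x / real P\<rfloor>"
    define c where "c = card {n\<in>{1..M}. weak_polignac (n * P)}"
    have cb: "2 * M < c * (k - 1) * k + 2 * (k - 1)"
      unfolding c_def P_def by (rule count_bound[OF assms])
    then have "real (2 * M) < real (c * (k - 1) * k + 2 * (k - 1))" by linarith
    then have cbr: "2 * real M < real c * real (k - 1) * real k + 2 * real (k - 1)"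
      by (simp only: of_nat_mult of_nat_add of_nat_numeral)
    have "real M \<ge> x / real P - 1" unfolding M_def by linarith
    have cnt: "real c \<le> real (polignac_count x)"
      using count_ge[OF elim, of k] unfolding c_def M_def P_def by simp
    have "real (k - 1) = real k - 1" using assms(1) by simp
    then have key: "2 * x / real P - 2 * real k \<le> real (polignac_count x) * (real (k - 1) * real k)"
    proof -
      have a: "real c * (real (k - 1) * real k) \<le> real (polignac_count x) * (real (k - 1) * real k)"
        using mult_right_mono[OF cnt, of "real (k - 1) * real k"] by simp
      have b: "2 * real M < real c * (real (k - 1) * real k) + 2 * real (k - 1)"
        using cbr by (simp only: mult.assoc)
      have d: "2 * x / real P = 2 * (x / real P)" by simp
      show ?thesis using a b d \<open>real M \<ge> x / real P - 1\<close> \<open>real (k - 1) = real k - 1\<close> by linarith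
    qed
    have "g x = (2 * x / real P - 2 * real k) / ((real (k - 1) * real k) * x)"
      unfolding g_def \<alpha>_def using elim k1pos Ppos assms(1)
      by (intro alg_id) auto
    also have "\<dots> \<le> (real (polignac_count x) * (real (k - 1) * real k)) / ((real (k - 1) * real k) * x)"
      using key elim k1pos assms(1) by (intro divide_right_mono) auto
    also have "\<dots> = real (polignac_count x) / x" using k1pos assms(1) by simp
    finally show ?case by simp
  qed
  have "((\<lambda>x. 2 / (real (k - 1) * x)) \<longlongrightarrow> 0) at_top"
    by (intro tendsto_divide_0[OF tendsto_const] filterlim_at_top_imp_at_infinity
        filterlim_tendsto_pos_mult_at_top[OF tendsto_const k1pos filterlim_ident])
  then have "(g \<longlongrightarrow> \<alpha>) at_top" unfolding g_def
    using tendsto_diff[OF tendsto_const, of _ 0 at_top \<alpha>] by simp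
  then have "((\<lambda>x. ereal (g x)) \<longlongrightarrow> ereal \<alpha>) at_top" by (rule tendsto_ereal)
  then have "Liminf at_top (\<lambda>x. ereal (g x)) = ereal \<alpha>"
    by (intro lim_imp_Liminf) auto
  then have "ereal \<alpha> \<le> Liminf at_top (\<lambda>x::real. ereal (real (polignac_count x) / x))"
    using Liminf_mono[OF ev] by simp
  moreover have "2 / (real (k - 1) * (real (k - 1) * real (k - 2) + 2) * real (primorial k)) \<le> \<alpha>"
    unfolding \<alpha>_def P_def using const_le[OF assms(1) primorial_pos] by simp
  ultimately show ?thesis using order_trans ereal_less_eq(3) by blast
qed

end
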